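(* Let $H\in(\frac12,1)$, $T>0$, $\alpha\in\mathbb{C}$ with $\operatorname{Re}(\alpha)>0$. For $t\in[0,T)$ let $$\psi_t(u,v)=(T-u)^{\bar\alpha-1}(T-v)^{-\bar\alpha}\mathbf{1}_{\{0\le v\le u\le t\}},\qquad \phi_t(u,v)=(T-u)^{\bar\alpha-1}(T-v)^{-\bar\alpha}\mathbf{1}_{\{0\le u\le v\le t\}}.$$ Then: (i) if $\operatorname{Re}(\alpha)\in(1-H,1)$, then $\lim_{t\to T}\mathbb{E}\big[|I_{1,1}(\psi_t)|^2\big]<\infty$; (ii) if $\operatorname{Re}(\alpha)\in(0,H)$, then $\lim_{t\to T}\mathbb{E}\big[|I_{1,1}(\phi_t)|^2\big]<\infty$.
   Context: For $z\in\mathbb{C}$, $x>0$: $x^z:=\exp(z\log x)$. $\zeta_t=\frac1{\sqrt2}(B^1_t+\mathrm{i}B^2_t)$ with $B^1,B^2$ independent fractional Brownian motions with Hurst parameter $H$. Let $\mathfrak{H}$ be the complex Hilbert space obtained by completing complex step functions on $[0,T]$ under $\langle f,g\rangle_{\mathfrak H}=H(2H-1)\int_{[0,T]^2}f(t)\overline{g(s)}|t-s|^{2H-2}\mathrm{d}t\mathrm{d}s$; for deterministic $g$, $\zeta(g):=\int_0^Tg\,\mathrm{d}\zeta$ is the Wiener integral, with $\mathbb{E}[\zeta(g)\overline{\zeta(h)}]=\langle g,h\rangle_{\mathfrak H}$. The complex double Wiener–It\^o integral $I_{1,1}$ is the linear map on $\mathfrak H\otimes\mathfrak H$ with $I_{1,1}(f)=\zeta(g)\overline{\zeta(h)}-\langle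 g,h\rangle_{\mathfrak H}$ for $f(u,v)=g(u)\overline{h(v)}$, extended by linearity and the isometry $\mathbb{E}|I_{1,1}(f)|^2=\|f\|^2_{\mathfrak H\otimes\mathfrak H}=(H(2H-1))^2\int_{[0,T]^4}f(u_1,v_1)\overline{f(u_2,v_2)}|u_1-u_2|^{2H-2}|v_1-v_2|^{2H-2}\mathrm{d}u_1\mathrm{d}u_2\mathrm{d}v_1\mathrm{d}v_2$. *)

theory Defs
  imports "HOL-Analysis.Analysis"
begin

definition cpow :: "real \<Rightarrow> complex \<Rightarrow> complex" where
  "cpow x z = exp (z * complex_of_real (ln x))"

definition psi_k :: "real \<Rightarrow> complex \<Rightarrow> real \<Rightarrow> real \<Rightarrow> real \<Rightarrow> complex" where
  "psi_k T a t u v = (if 0 \<le> v \<and> v \<le> u \<and> u \<le> t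
      then cpow (T - u) (cnj a - 1) * cpow (T - v) (- cnj a) else 0)"

definition phi_k :: "real \<Rightarrow> complex \<Rightarrow> real \<Rightarrow> real \<Rightarrow> real \<Rightarrow> complex" where
  "phi_k T a t u v = (if 0 \<le> u \<and> u \<le> v \<and> v \<le> t
      then cpow (T - u) (cnj a - 1) * cpow (T - v) (- cnj a) else 0)"

text \<open>Squared norm in H (x) H, i.e. E|I_{1,1}(f)|^2 by the isometry:
  (H(2H-1))^2 \<integral>_{[0,T]^4} f(u1,v1) conj(f(u2,v2)) |u1-u2|^(2H-2) |v1-v2|^(2H-2).
  Points are (u1,(u2,(v1,v2))).\<close>
definition hh_norm2 :: "real \<Rightarrow> real \<Rightarrow> (real \<Rightarrow> real \<Rightarrow> complex) \<Rightarrow> complex" where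
  "hh_norm2 H T f = complex_of_real ((H * (2 * H - 1))\<^sup>2) *
     (LINT x : {0..T} \<times> {0..T} \<times> {0..T} \<times> {0..T} | lborel \<Otimes>\<^sub>M lborel \<Otimes>\<^sub>M lborel \<Otimes>\<^sub>M lborel.
        (case x of (u1, u2, v1, v2) \<Rightarrow>
          f u1 v1 * cnj (f u2 v2) *
          complex_of_real (\<bar>u1 - u2\<bar> powr (2 * H - 2) * \<bar>v1 - v2\<bar> powr (2 * H - 2))))"

definition EI11sq :: "real \<Rightarrow> real \<Rightarrow> (real \<Rightarrow> real \<Rightarrow> complex) \<Rightarrow> complex" where
  "EI11sq H T f = hh_norm2 H T f"

end

theory Submission
  imports Defs
begin


lemma pow_int0:
  fixes p X :: real
  assumes "p > -1" "X \<ge> 0"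
  shows "(\<integral>\<^sup>+y. ennreal (indicator {0..X} y * y powr p) \<partial>lborel) = ennreal (X powr (p+1) / (p+1))"
proof -
  have "integral\<^sup>N lborel (\<lambda>y. indicator {0..X} y * y powr p) = X powr (p+1) / (p+1)"
    by (rule nn_integral_has_integral_lebesgue) (use has_integral_powr_from_0[OF assms] in auto)
  then show ?thesis by simp
qed

lemma pow_int1:
  fixes q x :: real
  assumes "q > -1" "x \<ge> 0"
  shows "(\<integral>\<^sup>+y. ennreal (indicator {0..x} y * (x - y) powr q) \<partial>lborel) = ennreal (x powr (q+1) / (q+1))"
proof -
  have "(\<integral>\<^sup>+y. ennreal (indicator {0..x} y * (x - y) powr q) \<partial>lborel)
     = (\<integral>\<^sup>+z. ennreal (indicator {0..x} (x + (-1) * z) * (x - (x + (-1) * z)) powr q) \<partial>lborel)"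
    using nn_integral_real_affine[of "\<lambda>y. ennreal (indicator {0..x} y * (x - y) powr q)" "-1" x] by simp
  also have "\<dots> = (\<integral>\<^sup>+z. ennreal (indicator {0..x} z * z powr q) \<partial>lborel)"
    by (intro nn_integral_cong) (auto simp: indicator_def)
  finally show ?thesis using pow_int0[OF assms] by simp
qed

lemma pt_bound:
  fixes p b x y :: real
  assumes "p > -1" "0 < b" "b < 1" "0 \<le> y" "y < x"
  shows "y powr p * (x - y) powr (-b) \<le> 2 powr b * x powr (-b) * y powr p + max 1 (2 powr (-p)) * x powr p * (x - y) powr (-b)"
proof (cases "y \<le> x/2")
  case True
  have "(x - y) powr (-b) \<le> (x/2) powr (-b)"
    by (rule powr_mono2') (use assms True in auto)
  also have "\<dots> = 2 powr b * x powr (-b)"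
    using assms by (simp add: powr_divide powr_minus_divide divide_simps)
  finally have "y powr p * (x - y) powr (-b) \<le> y powr p * (2 powr b * x powr (-b))"
    by (intro mult_left_mono) auto
  then show ?thesis by (simp add: mult_ac add_increasing2)
next
  case False
  have "y powr p \<le> max 1 (2 powr (-p)) * x powr p"
  proof (cases "p \<ge> 0")
    case True
    have "y powr p \<le> x powr p" by (rule powr_mono2) (use assms True in auto)
    also have "\<dots> \<le> max 1 (2 powr (-p)) * x powr p" using mult_right_mono[of 1 "max 1 (2 powr (-p))" "x powr p"] by simp
    finally show ?thesis .
  next
    case f: False
    have "y powr p \<le> (x/2) powr p" by (rule powr_mono2') (use assms False f in auto)
    also have "\<dots> = 2 powr (-p) * x powr p"
      using assms False by (simp add: powr_divide powr_minus_divide divide_simps)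
    also have "\<dots> \<le> max 1 (2 powr (-p)) * x powr p" by (intro mult_right_mono) auto
    finally show ?thesis .
  qed
  then have "y powr p * (x - y) powr (-b) \<le> max 1 (2 powr (-p)) * x powr p * (x - y) powr (-b)"
    by (intro mult_right_mono) auto
  then show ?thesis by (simp add: add_increasing)
qed

definition "Cst p b = 2 powr b / (p+1) + max 1 (2 powr (-p)) / (1-b)"

lemma inner_bound:
  fixes p b x :: real
  assumes "p > -1" "0 < b" "b < 1" "0 < x"
  shows "(\<integral>\<^sup>+y. ennreal (indicator {0..<x} y * y powr p * (x - y) powr (-b)) \<partial>lborel)
         \<le> ennreal (Cst p b * x powr (p + 1 - b))"
proof -
  define c where "c = max 1 (2 powr (-p))"
  have "(\<integral>\<^sup>+y. ennreal (indicator {0..<x} y * y powr p * (x - y) powr (-b)) \<partial>lborel)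
     \<le> (\<integral>\<^sup>+y. ennreal (2 powr b * x powr (-b)) * ennreal (indicator {0..x} y * y powr p)
           + ennreal (c * x powr p) * ennreal (indicator {0..x} y * (x - y) powr (-b)) \<partial>lborel)"
  proof (intro nn_integral_mono)
    fix y :: real
    show "ennreal (indicator {0..<x} y * y powr p * (x - y) powr (-b))
       \<le> ennreal (2 powr b * x powr (-b)) * ennreal (indicator {0..x} y * y powr p)
           + ennreal (c * x powr p) * ennreal (indicator {0..x} y * (x - y) powr (-b))"
    proof (cases "0 \<le> y \<and> y < x")
      case True
      then have "ennreal (indicator {0..<x} y * y powr p * (x - y) powr (-b))
          \<le> ennreal (2 powr b * x powr (-b) * y powr p + c * x powr p * (x - y) powr (-b))"
        using pt_bound[OF assms(1-3), of y x] by (intro ennreal_leI) (simp add: c_def)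
      also have "\<dots> = ennreal (2 powr b * x powr (-b)) * ennreal (indicator {0..x} y * y powr p)
           + ennreal (c * x powr p) * ennreal (indicator {0..x} y * (x - y) powr (-b))"
        using True by (simp add: ennreal_plus[symmetric] ennreal_mult[symmetric] c_def del: ennreal_plus)
      finally show ?thesis .
    qed auto
  qed
  also have "\<dots> = ennreal (2 powr b * x powr (-b)) * (\<integral>\<^sup>+y. ennreal (indicator {0..x} y * y powr p) \<partial>lborel)
      + ennreal (c * x powr p) * (\<integral>\<^sup>+y. ennreal (indicator {0..x} y * (x - y) powr (-b)) \<partial>lborel)"
    by (simp add: nn_integral_add nn_integral_cmult)
  also have "\<dots> = ennreal (2 powr b * x powr (-b) * (x powr (p+1) / (p+1)) + c * x powr p * (x powr (-b+1) / (-b+1)))"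
    using assms by (simp add: pow_int0 pow_int1 ennreal_plus[symmetric] ennreal_mult[symmetric] c_def del: ennreal_plus)
  also have "\<dots> = ennreal (Cst p b * x powr (p + 1 - b))"
  proof -
    have "2 powr b * x powr (-b) * (x powr (p+1) / (p+1)) + c * x powr p * (x powr (-b+1) / (-b+1))
        = (2 powr b / (p+1)) * (x powr (-b) * x powr (p+1)) + (c / (1-b)) * (x powr p * x powr (-b+1))"
      using assms by (simp add: field_simps)
    also have "\<dots> = Cst p b * x powr (p + 1 - b)"
      by (simp add: powr_add[symmetric] Cst_def c_def algebra_simps)
    finally show ?thesis by simp
  qed
  finally show ?thesis .
qed

lemma Cst_nonneg: "(p::real) > -1 \<Longrightarrow> b < 1 \<Longrightarrow> 0 \<le> Cst p b"
  unfolding Cst_def by (intro add_nonneg_nonneg divide_nonneg_pos) auto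

lemma tri_bound:
  fixes p b T :: real
  assumes "p > -1" "0 < b" "b < 1" "2*p+2-b > 0" "T > 0"
  shows "(\<integral>\<^sup>+x. \<integral>\<^sup>+y. ennreal (indicator {0..T} x * indicator {0..T} y * indicator {..<x} y
             * x powr p * y powr p * \<bar>x - y\<bar> powr (-b)) \<partial>lborel \<partial>lborel)
         \<le> ennreal (Cst p b * (T powr (2*p+2-b) / (2*p+2-b)))"
proof -
  have "(\<integral>\<^sup>+x. \<integral>\<^sup>+y. ennreal (indicator {0..T} x * indicator {0..T} y * indicator {..<x} y
             * x powr p * y powr p * \<bar>x - y\<bar> powr (-b)) \<partial>lborel \<partial>lborel)
     \<le> (\<integral>\<^sup>+x. ennreal (Cst p b) * ennreal (indicator {0..T} x * x powr (2*p+1-b)) \<partial>lborel)"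
  proof (intro nn_integral_mono)
    fix x :: real
    show "(\<integral>\<^sup>+y. ennreal (indicator {0..T} x * indicator {0..T} y * indicator {..<x} y
             * x powr p * y powr p * \<bar>x - y\<bar> powr (-b)) \<partial>lborel)
        \<le> ennreal (Cst p b) * ennreal (indicator {0..T} x * x powr (2*p+1-b))"
    proof (cases "0 < x \<and> x \<le> T")
      case True
      have "(\<integral>\<^sup>+y. ennreal (indicator {0..T} x * indicator {0..T} y * indicator {..<x} y
             * x powr p * y powr p * \<bar>x - y\<bar> powr (-b)) \<partial>lborel)
          = (\<integral>\<^sup>+y. ennreal (x powr p) * ennreal (indicator {0..<x} y * y powr p * (x - y) powr (-b)) \<partial>lborel)"
        using True by (intro nn_integral_cong) (auto simp: indicator_def ennreal_mult[symmetric])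
      also have "\<dots> = ennreal (x powr p) * (\<integral>\<^sup>+y. ennreal (indicator {0..<x} y * y powr p * (x - y) powr (-b)) \<partial>lborel)"
        by (simp add: nn_integral_cmult)
      also have "\<dots> \<le> ennreal (x powr p) * ennreal (Cst p b * x powr (p + 1 - b))"
        using True assms by (intro mult_left_mono inner_bound) auto
      also have "\<dots> = ennreal (Cst p b) * ennreal (indicator {0..T} x * x powr (2*p+1-b))"
      proof -
        have "x powr p * (Cst p b * x powr (p + 1 - b)) = Cst p b * (x powr p * x powr (p + 1 - b))" by simp
        also have "\<dots> = Cst p b * x powr (2*p+1-b)" by (simp add: powr_add[symmetric] algebra_simps)
        finally show ?thesis using True assms Cst_nonneg[of p b]
          by (simp add: ennreal_mult[symmetric])
      qed
      finally show ?thesis .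
    next
      case False
      have "(\<integral>\<^sup>+y. ennreal (indicator {0..T} x * indicator {0..T} y * indicator {..<x} y
             * x powr p * y powr p * \<bar>x - y\<bar> powr (-b)) \<partial>lborel) = (\<integral>\<^sup>+y. 0 \<partial>(lborel::real measure))"
      proof (intro nn_integral_cong)
        fix y :: real
        have "indicator {0..T} x * indicator {0..T} y * indicator {..<x} y = (0::real)"
          using False by (auto simp: indicator_def)
        then show "ennreal (indicator {0..T} x * indicator {0..T} y * indicator {..<x} y
             * x powr p * y powr p * \<bar>x - y\<bar> powr (-b)) = 0" by simp
      qed
      then show ?thesis by simp
    qed
  qed
  also have "\<dots> = ennreal (Cst p b) * ennreal (T powr (2*p+1-b+1) / (2*p+1-b+1))"
    using assms by (simp add: nn_integral_cmult pow_int0)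
  also have "\<dots> = ennreal (Cst p b * (T powr (2*p+2-b) / (2*p+2-b)))"
    using assms Cst_nonneg[of p b] by (simp add: ennreal_mult[symmetric] algebra_simps)
  finally show ?thesis .
qed

lemma sq_bound:
  fixes p b T :: real
  assumes "p > -1" "0 < b" "b < 1" "2*p+2-b > 0" "T > 0"
  shows "(\<integral>\<^sup>+x. \<integral>\<^sup>+y. ennreal (indicator {0..T} x * indicator {0..T} y
             * x powr p * y powr p * \<bar>x - y\<bar> powr (-b)) \<partial>lborel \<partial>lborel) < \<infinity>"
proof -
  define f where "f = (\<lambda>x y::real. indicator {0..T} x * indicator {0..T} y * x powr p * y powr p * \<bar>x - y\<bar> powr (-b))"
  have fm[measurable]: "(\<lambda>z. f (fst z) (snd z)) \<in> borel_measurable (lborel \<Otimes>\<^sub>M lborel)"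
    unfolding f_def by measurable
  have fsym: "f x y = f y x" for x y unfolding f_def by (simp add: abs_minus_commute mult_ac)
  have split: "ennreal (f x y) = ennreal (f x y * indicator {..<x} y) + ennreal (f x y * indicator {x<..} y)" for x y
    by (cases x y rule: linorder_cases) (auto simp: f_def indicator_def)
  define A where "A = (\<integral>\<^sup>+x. \<integral>\<^sup>+y. ennreal (f x y * indicator {..<x} y) \<partial>lborel \<partial>lborel)"
  have m1[measurable]: "(\<lambda>z. ennreal (f (fst z) (snd z) * indicator {..<fst z} (snd z))) \<in> borel_measurable (lborel \<Otimes>\<^sub>M lborel)"
    unfolding f_def indicator_def lessThan_iff greaterThan_iff by measurable
  have m2[measurable]: "(\<lambda>z. ennreal (f (fst z) (snd z) * indicator {fst z<..} (snd z))) \<in> borel_measurable (lborel \<Otimes>\<^sub>M lborel)"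
    unfolding f_def indicator_def lessThan_iff greaterThan_iff by measurable
  have "(\<integral>\<^sup>+x. \<integral>\<^sup>+y. ennreal (f x y) \<partial>lborel \<partial>lborel)
      = (\<integral>\<^sup>+x. (\<integral>\<^sup>+y. ennreal (f x y * indicator {..<x} y) \<partial>lborel) + (\<integral>\<^sup>+y. ennreal (f x y * indicator {x<..} y) \<partial>lborel) \<partial>lborel)"
  proof (intro nn_integral_cong)
    fix x :: real
    have [measurable]: "(\<lambda>y. ennreal (f x y * indicator {..<x} y)) \<in> borel_measurable lborel"
      "(\<lambda>y. ennreal (f x y * indicator {x<..} y)) \<in> borel_measurable lborel"
      using measurable_Pair2[OF m1, of x] measurable_Pair2[OF m2, of x] by simp_all
    show "(\<integral>\<^sup>+y. ennreal (f x y) \<partial>lborel) = (\<integral>\<^sup>+y. ennreal (f x y * indicator {..<x} y) \<partial>lborel) + (\<integral>\<^sup>+y. ennreal (f x y * indicator {x<..} y) \<partial>lborel)"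
      by (subst split) (rule nn_integral_add; measurable)
  qed
  also have "\<dots> = A + (\<integral>\<^sup>+x. \<integral>\<^sup>+y. ennreal (f x y * indicator {x<..} y) \<partial>lborel \<partial>lborel)"
    unfolding A_def by (rule nn_integral_add) measurable
  also have "(\<integral>\<^sup>+x. \<integral>\<^sup>+y. ennreal (f x y * indicator {x<..} y) \<partial>lborel \<partial>lborel)
      = (\<integral>\<^sup>+y. \<integral>\<^sup>+x. ennreal (f x y * indicator {x<..} y) \<partial>lborel \<partial>lborel)"
    using lborel_pair.Fubini[OF m2] by simp
  also have "\<dots> = A"
    unfolding A_def by (intro nn_integral_cong) (simp add: fsym indicator_def)
  finally have eq: "(\<integral>\<^sup>+x. \<integral>\<^sup>+y. ennreal (f x y) \<partial>lborel \<partial>lborel) = A + A" .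
  have "A \<le> ennreal (Cst p b * (T powr (2*p+2-b) / (2*p+2-b)))"
    unfolding A_def f_def using tri_bound[OF assms] by (simp add: mult_ac)
  then have "A < \<infinity>" by (rule order.strict_trans1) simp
  with eq show ?thesis unfolding f_def by simp
qed

lemma sqT_bound:
  fixes p b T :: real
  assumes "p > -1" "0 < b" "b < 1" "2*p+2-b > 0" "T > 0"
  shows "(\<integral>\<^sup>+u. \<integral>\<^sup>+v. ennreal (indicator {0..T} u * indicator {0..T} v
             * (T - u) powr p * (T - v) powr p * \<bar>u - v\<bar> powr (-b)) \<partial>lborel \<partial>lborel) < \<infinity>"
proof -
  define g where "g = (\<lambda>u v::real. ennreal (indicator {0..T} u * indicator {0..T} v
             * (T - u) powr p * (T - v) powr p * \<bar>u - v\<bar> powr (-b)))"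
  have gm: "(\<lambda>v. g u v) \<in> borel_measurable borel" for u unfolding g_def by measurable
  have "(\<integral>\<^sup>+u. \<integral>\<^sup>+v. g u v \<partial>lborel \<partial>lborel) = (\<integral>\<^sup>+u. \<integral>\<^sup>+y. g u (T + (-1) * y) \<partial>lborel \<partial>lborel)"
  proof (rule nn_integral_cong)
    fix u :: real
    show "(\<integral>\<^sup>+v. g u v \<partial>lborel) = (\<integral>\<^sup>+y. g u (T + (-1) * y) \<partial>lborel)"
      using nn_integral_real_affine[OF gm[of u], of "-1" T] by simp
  qed
  also have "\<dots> = (\<integral>\<^sup>+x. \<integral>\<^sup>+y. g (T + (-1) * x) (T + (-1) * y) \<partial>lborel \<partial>lborel)"
  proof -
    have "(\<lambda>u. \<integral>\<^sup>+y. g u (T + (-1) * y) \<partial>lborel) \<in> borel_measurable borel"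
      unfolding g_def by measurable
    from nn_integral_real_affine[OF this, of "-1" T] show ?thesis by simp
  qed
  also have "\<dots> = (\<integral>\<^sup>+x. \<integral>\<^sup>+y. ennreal (indicator {0..T} x * indicator {0..T} y
             * x powr p * y powr p * \<bar>x - y\<bar> powr (-b)) \<partial>lborel \<partial>lborel)"
    unfolding g_def by (intro nn_integral_cong) (auto simp: indicator_def abs_minus_commute)
  finally show ?thesis using sq_bound[OF assms] unfolding g_def by simp
qed

lemma four_int:
  fixes a c :: "real \<times> real \<Rightarrow> real"
  assumes am[measurable]: "a \<in> borel_measurable (lborel \<Otimes>\<^sub>M lborel)"
    and cm[measurable]: "c \<in> borel_measurable (lborel \<Otimes>\<^sub>M lborel)"
    and an: "\<And>z. 0 \<le> a z" and cn: "\<And>z. 0 \<le> c z"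
    and ai: "(\<integral>\<^sup>+x. \<integral>\<^sup>+y. ennreal (a (x, y)) \<partial>lborel \<partial>lborel) < \<infinity>"
    and ci: "(\<integral>\<^sup>+x. \<integral>\<^sup>+y. ennreal (c (x, y)) \<partial>lborel \<partial>lborel) < \<infinity>"
  shows "integrable (lborel \<Otimes>\<^sub>M lborel \<Otimes>\<^sub>M lborel \<Otimes>\<^sub>M lborel)
           (\<lambda>x. a (fst x, fst (snd x)) * c (fst (snd (snd x)), snd (snd (snd x))))"
proof (rule integrableI_bounded)
  have sf2: "sigma_finite_measure (lborel \<Otimes>\<^sub>M lborel :: (real \<times> real) measure)"
    by (intro sigma_finite_pair_measure sigma_finite_lborel)
  interpret N2: sigma_finite_measure "lborel \<Otimes>\<^sub>M lborel :: (real \<times> real) measure"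
    by (rule sf2)
  interpret N1: sigma_finite_measure "lborel \<Otimes>\<^sub>M lborel \<Otimes>\<^sub>M lborel :: (real \<times> real \<times> real) measure"
    by (intro sigma_finite_pair_measure sigma_finite_lborel sf2)
  show "(\<lambda>x. a (fst x, fst (snd x)) * c (fst (snd (snd x)), snd (snd (snd x))))
     \<in> borel_measurable (lborel \<Otimes>\<^sub>M lborel \<Otimes>\<^sub>M lborel \<Otimes>\<^sub>M lborel)" by measurable
  have m4: "(\<lambda>x. ennreal (a (fst x, fst (snd x))) * ennreal (c (fst (snd (snd x)), snd (snd (snd x)))))
     \<in> borel_measurable (lborel \<Otimes>\<^sub>M lborel \<Otimes>\<^sub>M lborel \<Otimes>\<^sub>M lborel)" by measurable
  have m3: "(\<lambda>y. ennreal (a (u1, fst y)) * ennreal (c (fst (snd y), snd (snd y))))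
     \<in> borel_measurable (lborel \<Otimes>\<^sub>M lborel \<Otimes>\<^sub>M lborel)" for u1 by measurable
  define Ic where "Ic = (\<integral>\<^sup>+x. \<integral>\<^sup>+y. ennreal (c (x, y)) \<partial>lborel \<partial>lborel)"
  define Ia where "Ia = (\<integral>\<^sup>+x. \<integral>\<^sup>+y. ennreal (a (x, y)) \<partial>lborel \<partial>lborel)"
  have "(\<integral>\<^sup>+x. ennreal (norm (a (fst x, fst (snd x)) * c (fst (snd (snd x)), snd (snd (snd x))))) 
          \<partial>(lborel \<Otimes>\<^sub>M lborel \<Otimes>\<^sub>M lborel \<Otimes>\<^sub>M lborel))
     = (\<integral>\<^sup>+x. ennreal (a (fst x, fst (snd x))) * ennreal (c (fst (snd (snd x)), snd (snd (snd x)))) 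
          \<partial>(lborel \<Otimes>\<^sub>M lborel \<Otimes>\<^sub>M lborel \<Otimes>\<^sub>M lborel))"
    using an cn by (intro nn_integral_cong) (simp add: ennreal_mult abs_mult)
  also have "\<dots> = (\<integral>\<^sup>+u1. \<integral>\<^sup>+y. ennreal (a (u1, fst y)) * ennreal (c (fst (snd y), snd (snd y))) 
          \<partial>(lborel \<Otimes>\<^sub>M lborel \<Otimes>\<^sub>M lborel) \<partial>lborel)"
    using N1.nn_integral_fst[OF m4] by simp
  also have "\<dots> = (\<integral>\<^sup>+u1. \<integral>\<^sup>+u2. \<integral>\<^sup>+z. ennreal (a (u1, u2)) * ennreal (c (fst z, snd z)) 
          \<partial>(lborel \<Otimes>\<^sub>M lborel) \<partial>lborel \<partial>lborel)"
  proof (rule nn_integral_cong)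
    fix u1 :: real
    show "(\<integral>\<^sup>+y. ennreal (a (u1, fst y)) * ennreal (c (fst (snd y), snd (snd y))) \<partial>(lborel \<Otimes>\<^sub>M lborel \<Otimes>\<^sub>M lborel))
      = (\<integral>\<^sup>+u2. \<integral>\<^sup>+z. ennreal (a (u1, u2)) * ennreal (c (fst z, snd z)) \<partial>(lborel \<Otimes>\<^sub>M lborel) \<partial>lborel)"
      using sigma_finite_measure.nn_integral_fst[OF sf2 m3[of u1]] by simp
  qed
  also have "\<dots> = (\<integral>\<^sup>+u1. \<integral>\<^sup>+u2. ennreal (a (u1, u2)) * Ic \<partial>lborel \<partial>lborel)"
  proof (intro nn_integral_cong)
    fix u1 u2 :: real
    have "(\<integral>\<^sup>+z. ennreal (a (u1, u2)) * ennreal (c (fst z, snd z)) \<partial>(lborel \<Otimes>\<^sub>M lborel))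
        = ennreal (a (u1, u2)) * (\<integral>\<^sup>+z. ennreal (c z) \<partial>(lborel \<Otimes>\<^sub>M lborel))"
      by (subst nn_integral_cmult) auto
    also have "(\<integral>\<^sup>+z. ennreal (c z) \<partial>(lborel \<Otimes>\<^sub>M lborel)) = Ic"
      unfolding Ic_def by (subst lborel.nn_integral_fst[symmetric]) auto
    finally show "(\<integral>\<^sup>+z. ennreal (a (u1, u2)) * ennreal (c (fst z, snd z)) \<partial>(lborel \<Otimes>\<^sub>M lborel))
        = ennreal (a (u1, u2)) * Ic" .
  qed
  also have "\<dots> = (\<integral>\<^sup>+u1. (\<integral>\<^sup>+u2. ennreal (a (u1, u2)) \<partial>lborel) * Ic \<partial>lborel)"
    by (intro nn_integral_cong nn_integral_multc) measurable
  also have "\<dots> = Ia * Ic"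
    unfolding Ia_def by (rule nn_integral_multc) measurable
  also have "\<dots> < \<infinity>" using ai ci unfolding Ia_def Ic_def by (simp add: ennreal_mult_less_top)
  finally show "(\<integral>\<^sup>+x. ennreal (norm (a (fst x, fst (snd x)) * c (fst (snd (snd x)), snd (snd (snd x))))) 
          \<partial>(lborel \<Otimes>\<^sub>M lborel \<Otimes>\<^sub>M lborel \<Otimes>\<^sub>M lborel)) < \<infinity>" .
qed



lemma borel_measurable_cnj_my [measurable]: "(cnj :: complex \<Rightarrow> complex) \<in> borel_measurable borel"
  by (intro borel_measurable_continuous_onI continuous_intros)

lemma main_lim:
  fixes F :: "real \<Rightarrow> real \<Rightarrow> real \<Rightarrow> complex" and G :: "real \<Rightarrow> real \<Rightarrow> complex" and H T p q :: real
  assumes H: "1/2 < H" "H < 1" "0 < T" "-H < p" "-H < q"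
  and Fm: "\<And>t. (\<lambda>z. F t (fst z) (snd z)) \<in> borel_measurable (lborel \<Otimes>\<^sub>M lborel)"
  and Gm: "(\<lambda>z. G (fst z) (snd z)) \<in> borel_measurable (lborel \<Otimes>\<^sub>M lborel)"
  and Fb: "\<And>t u v. t < T \<Longrightarrow> 0 \<le> u \<Longrightarrow> u \<le> T \<Longrightarrow> 0 \<le> v \<Longrightarrow> v \<le> T \<Longrightarrow>
             norm (F t u v) \<le> (T - u) powr p * (T - v) powr q"
  and Flim: "\<And>u v. ((\<lambda>t. F t u v) \<longlongrightarrow> G u v) (at_left T)"
  shows "\<exists>L. ((\<lambda>t. EI11sq H T (F t)) \<longlongrightarrow> L) (at_left T)"
proof -
  define b where "b = 2 - 2 * H"
  have b: "0 < b" "b < 1" "2 * H - 2 = - b" using H unfolding b_def by auto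
  define M where "M = (lborel \<Otimes>\<^sub>M lborel \<Otimes>\<^sub>M lborel \<Otimes>\<^sub>M lborel :: (real \<times> real \<times> real \<times> real) measure)"
  define A where "A = ({0..T} \<times> {0..T} \<times> {0..T} \<times> {0..T} :: (real \<times> real \<times> real \<times> real) set)"
  define gi where "gi = (\<lambda>(f :: real \<Rightarrow> real \<Rightarrow> complex) (x :: real \<times> real \<times> real \<times> real).
     indicator A x *\<^sub>R (f (fst x) (fst (snd (snd x))) * cnj (f (fst (snd x)) (snd (snd (snd x)))) *
       complex_of_real (\<bar>fst x - fst (snd x)\<bar> powr (2 * H - 2) * \<bar>fst (snd (snd x)) - snd (snd (snd x))\<bar> powr (2 * H - 2))))"
  have EI: "EI11sq H T f = complex_of_real ((H * (2 * H - 1))\<^sup>2) * integral\<^sup>L M (gi f)" for f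
    unfolding EI11sq_def hh_norm2_def set_lebesgue_integral_def gi_def M_def A_def
    by (simp add: split_beta)
  have gim: "gi f \<in> borel_measurable M" if fm: "(\<lambda>z. f (fst z) (snd z)) \<in> borel_measurable (lborel \<Otimes>\<^sub>M lborel)" for f
  proof -
    have [measurable]: "(\<lambda>x. f (fst x) (fst (snd (snd x)))) \<in> borel_measurable (lborel \<Otimes>\<^sub>M lborel \<Otimes>\<^sub>M lborel \<Otimes>\<^sub>M lborel)"
      by (rule measurable_compose[OF _ fm, of "\<lambda>x. (fst x, fst (snd (snd x)))", simplified]) measurable
    have [measurable]: "(\<lambda>x. f (fst (snd x)) (snd (snd (snd x)))) \<in> borel_measurable (lborel \<Otimes>\<^sub>M lborel \<Otimes>\<^sub>M lborel \<Otimes>\<^sub>M lborel)"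
      by (rule measurable_compose[OF _ fm, of "\<lambda>x. (fst (snd x), snd (snd (snd x)))", simplified]) measurable
    have [measurable]: "A \<in> sets (lborel \<Otimes>\<^sub>M lborel \<Otimes>\<^sub>M lborel \<Otimes>\<^sub>M lborel)" unfolding A_def by measurable
    show ?thesis unfolding gi_def M_def by measurable
  qed
  define k where "k = (\<lambda>r (z :: real \<times> real). indicator {0..T} (fst z) * indicator {0..T} (snd z)
      * (T - fst z) powr r * (T - snd z) powr r * \<bar>fst z - snd z\<bar> powr (-b))"
  define w where "w = (\<lambda>x :: real \<times> real \<times> real \<times> real. k p (fst x, fst (snd x)) * k q (fst (snd (snd x)), snd (snd (snd x))))"
  have km: "k r \<in> borel_measurable (lborel \<Otimes>\<^sub>M lborel)" for r unfolding k_def by measurable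
  have kn: "0 \<le> k r z" for r z unfolding k_def by (auto simp: indicator_def)
  have ki: "(\<integral>\<^sup>+x. \<integral>\<^sup>+y. ennreal (k r (x, y)) \<partial>lborel \<partial>lborel) < \<infinity>" if "-H < r" for r
    proof -
    have "-1 < r" "2*r+2-b > 0" using that H b unfolding b_def by auto
    from sqT_bound[OF this(1) b(1,2) this(2) H(3)] show ?thesis unfolding k_def by simp
  qed
  have wi: "integrable M w"
    unfolding M_def w_def using H by (intro four_int km kn ki) auto
  have "((\<lambda>t. integral\<^sup>L M (gi (F t))) \<longlongrightarrow> integral\<^sup>L M (gi G)) (at_left T)"
  proof (rule tendsto_at_left_sequentially[of 0])
    show "0 < T" using H by simp
    fix S :: "nat \<Rightarrow> real"
    assume S: "\<And>n. S n < T" "\<And>n. 0 < S n" "incseq S" "S \<longlonglongrightarrow> T"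
    have Sf: "filterlim S (at_left T) sequentially"
      by (rule tendsto_imp_filterlim_at_left[OF S(4)]) (use S(1) in auto)
    show "(\<lambda>n. integral\<^sup>L M (gi (F (S n)))) \<longlonglongrightarrow> integral\<^sup>L M (gi G)"
    proof (rule integral_dominated_convergence[where w = w])
      show "gi G \<in> borel_measurable M" by (rule gim[OF Gm])
      show "gi (F (S n)) \<in> borel_measurable M" for n by (rule gim[OF Fm])
      show "integrable M w" by (rule wi)
      show "AE x in M. (\<lambda>n. gi (F (S n)) x) \<longlonglongrightarrow> gi G x"
      proof (rule AE_I2)
        fix x :: "real \<times> real \<times> real \<times> real"
        have l: "(\<lambda>n. F (S n) u v) \<longlonglongrightarrow> G u v" for u v
          by (rule filterlim_compose[OF Flim Sf])
        show "(\<lambda>n. gi (F (S n)) x) \<longlonglongrightarrow> gi G x"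
          unfolding gi_def by (intro tendsto_intros l)
      qed
      show "AE x in M. norm (gi (F (S n)) x) \<le> w x" for n
      proof (rule AE_I2)
        fix x :: "real \<times> real \<times> real \<times> real"
        obtain u1 u2 v1 v2 where x: "x = (u1, u2, v1, v2)" by (cases x) auto
        show "norm (gi (F (S n)) x) \<le> w x"
        proof (cases "x \<in> A")
          case False
          then show ?thesis unfolding gi_def w_def using kn by (simp add: mult_nonneg_nonneg)
        next
          case True
          then have r: "0 \<le> u1" "u1 \<le> T" "0 \<le> u2" "u2 \<le> T" "0 \<le> v1" "v1 \<le> T" "0 \<le> v2" "v2 \<le> T"
            unfolding x A_def by auto
          define K where "K = \<bar>u1 - u2\<bar> powr (-b) * \<bar>v1 - v2\<bar> powr (-b)"
          have K0: "0 \<le> K" unfolding K_def by simp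
          have n1: "norm (F (S n) u1 v1) \<le> (T - u1) powr p * (T - v1) powr q" using Fb[OF S(1) r(1,2,5,6)] .
          have n2: "norm (F (S n) u2 v2) \<le> (T - u2) powr p * (T - v2) powr q" using Fb[OF S(1) r(3,4,7,8)] .
          have "norm (gi (F (S n)) x) = norm (F (S n) u1 v1) * norm (F (S n) u2 v2) * K"
            using True unfolding gi_def x K_def b(3) by (simp add: norm_mult abs_mult)
          also have "\<dots> \<le> ((T - u1) powr p * (T - v1) powr q) * ((T - u2) powr p * (T - v2) powr q) * K"
            by (intro mult_right_mono mult_mono n1 n2 K0) auto
          also have "\<dots> = w x"
            using r unfolding w_def k_def x K_def by (simp add: indicator_def mult_ac)
          finally show ?thesis .
        qed
      qed
    qed
  qed
  then have "((\<lambda>t. complex_of_real ((H * (2 * H - 1))\<^sup>2) * integral\<^sup>L M (gi (F t))) \<longlongrightarrow>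
      complex_of_real ((H * (2 * H - 1))\<^sup>2) * integral\<^sup>L M (gi G)) (at_left T)" by (rule tendsto_mult_left)
  then show ?thesis unfolding EI by blast
qed


lemma norm_cpow: "0 < x \<Longrightarrow> norm (cpow x z) = x powr (Re z)"
  unfolding cpow_def by (simp add: powr_def mult.commute)

lemma k1:
  fixes X Y r :: real
  assumes "0 < X" "X \<le> Y" "1/2 \<le> r"
  shows "X powr (r-1) * Y powr (-r) \<le> X powr (-1/2) * Y powr (-1/2)"
proof -
  have "Y powr (1/2 - r) \<le> X powr (1/2 - r)" by (rule powr_mono2') (use assms in auto)
  then have "X powr (r-1) * (Y powr (-1/2) * Y powr (1/2 - r)) \<le> X powr (r-1) * (Y powr (-1/2) * X powr (1/2 - r))"
    by (intro mult_left_mono) auto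
  also have "X powr (r-1) * (Y powr (-1/2) * X powr (1/2 - r)) = (X powr (r-1) * X powr (1/2 - r)) * Y powr (-1/2)"
    by simp
  also have "X powr (r-1) * X powr (1/2 - r) = X powr (-1/2)" by (simp add: powr_add[symmetric])
  also have "Y powr (-1/2) * Y powr (1/2 - r) = Y powr (-r)" by (simp add: powr_add[symmetric])
  finally show ?thesis .
qed

lemma k2:
  fixes X Y r :: real
  assumes "0 < Y" "Y \<le> X" "r \<le> 1/2"
  shows "X powr (r-1) * Y powr (-r) \<le> X powr (-1/2) * Y powr (-1/2)"
proof -
  have "X powr (r - 1/2) \<le> Y powr (r - 1/2)" by (rule powr_mono2') (use assms in auto)
  then have "(X powr (-1/2) * X powr (r - 1/2)) * Y powr (-r) \<le> (X powr (-1/2) * Y powr (r - 1/2)) * Y powr (-r)"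
    by (intro mult_right_mono mult_left_mono) auto
  also have "(X powr (-1/2) * Y powr (r - 1/2)) * Y powr (-r) = X powr (-1/2) * (Y powr (r - 1/2) * Y powr (-r))"
    by simp
  also have "Y powr (r - 1/2) * Y powr (-r) = Y powr (-1/2)" by (simp add: powr_add[symmetric])
  also have "X powr (-1/2) * X powr (r - 1/2) = X powr (r-1)" by (simp add: powr_add[symmetric])
  finally show ?thesis .
qed

lemma psi_meas: "(\<lambda>z. psi_k T a t (fst z) (snd z)) \<in> borel_measurable (lborel \<Otimes>\<^sub>M lborel)"
  unfolding psi_k_def cpow_def by measurable

lemma phi_meas: "(\<lambda>z. phi_k T a t (fst z) (snd z)) \<in> borel_measurable (lborel \<Otimes>\<^sub>M lborel)"
  unfolding phi_k_def cpow_def by measurable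

lemma norm_psi:
  assumes "0 \<le> v" "v \<le> u" "u \<le> t" "t < T"
  shows "norm (psi_k T a t u v) = (T - u) powr (Re a - 1) * (T - v) powr (- Re a)"
  using assms by (simp add: psi_k_def norm_mult norm_cpow)

lemma norm_phi:
  assumes "0 \<le> u" "u \<le> v" "v \<le> t" "t < T"
  shows "norm (phi_k T a t u v) = (T - u) powr (Re a - 1) * (T - v) powr (- Re a)"
  using assms by (simp add: phi_k_def norm_mult norm_cpow)

lemma psi_lim:
  "((\<lambda>t. psi_k T a t u v) \<longlongrightarrow> (if 0 \<le> v \<and> v \<le> u \<and> u < T
      then cpow (T - u) (cnj a - 1) * cpow (T - v) (- cnj a) else 0)) (at_left T)"
proof (rule tendsto_eventually)
  show "\<forall>\<^sub>F t in at_left T. psi_k T a t u v = (if 0 \<le> v \<and> v \<le> u \<and> u < T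
      then cpow (T - u) (cnj a - 1) * cpow (T - v) (- cnj a) else 0)"
  proof (cases "u < T")
    case True
    show ?thesis using eventually_at_left_real[OF True]
      by eventually_elim (use True in \<open>auto simp: psi_k_def\<close>)
  next
    case False
    have T1: "T - 1 < T" by simp
    show ?thesis using eventually_at_left_real[OF T1]
      by eventually_elim (use False in \<open>auto simp: psi_k_def\<close>)
  qed
qed

lemma phi_lim:
  "((\<lambda>t. phi_k T a t u v) \<longlongrightarrow> (if 0 \<le> u \<and> u \<le> v \<and> v < T
      then cpow (T - u) (cnj a - 1) * cpow (T - v) (- cnj a) else 0)) (at_left T)"
proof (rule tendsto_eventually)
  show "\<forall>\<^sub>F t in at_left T. phi_k T a t u v = (if 0 \<le> u \<and> u \<le> v \<and> v < T
      then cpow (T - u) (cnj a - 1) * cpow (T - v) (- cnj a) else 0)"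
  proof (cases "v < T")
    case True
    show ?thesis using eventually_at_left_real[OF True]
      by eventually_elim (use True in \<open>auto simp: phi_k_def\<close>)
  next
    case False
    have T1: "T - 1 < T" by simp
    show ?thesis using eventually_at_left_real[OF T1]
      by eventually_elim (use False in \<open>auto simp: phi_k_def\<close>)
  qed
qed

lemma psiG_meas: "(\<lambda>z. (if 0 \<le> snd z \<and> snd z \<le> fst z \<and> fst z < T
      then cpow (T - fst z) (cnj a - 1) * cpow (T - snd z) (- cnj a) else 0)) \<in> borel_measurable (lborel \<Otimes>\<^sub>M lborel)"
  unfolding cpow_def by measurable

lemma phiG_meas: "(\<lambda>z. (if 0 \<le> fst z \<and> fst z \<le> snd z \<and> snd z < T
      then cpow (T - fst z) (cnj a - 1) * cpow (T - snd z) (- cnj a) else 0)) \<in> borel_measurable (lborel \<Otimes>\<^sub>M lborel)"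
  unfolding cpow_def by measurable

theorem proposition4p2:
  fixes H T :: real and a :: complex
  assumes "1/2 < H" "H < 1" "0 < T" "0 < Re a"
  shows "(1 - H < Re a \<and> Re a < 1 \<longrightarrow>
           (\<exists>L. ((\<lambda>t. EI11sq H T (psi_k T a t)) \<longlongrightarrow> L) (at_left T)))
       \<and> (Re a < H \<longrightarrow>
           (\<exists>L. ((\<lambda>t. EI11sq H T (phi_k T a t)) \<longlongrightarrow> L) (at_left T)))"
proof (intro conjI impI)
  assume r: "1 - H < Re a \<and> Re a < 1"
  show "\<exists>L. ((\<lambda>t. EI11sq H T (psi_k T a t)) \<longlongrightarrow> L) (at_left T)"
  proof (cases "1/2 \<le> Re a")
    case True
    show ?thesis
    proof (rule main_lim[where p = "-1/2" and q = "-1/2", OF assms(1-3) _ _ psi_meas psiG_meas _ psi_lim])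
      fix t u v :: real assume tuv: "t < T" "0 \<le> u" "u \<le> T" "0 \<le> v" "v \<le> T"
      show "norm (psi_k T a t u v) \<le> (T - u) powr (-1/2) * (T - v) powr (-1/2)"
      proof (cases "0 \<le> v \<and> v \<le> u \<and> u \<le> t")
        case c: True
        then show ?thesis using tuv True k1[of "T-u" "T-v" "Re a"] by (simp add: norm_psi)
      qed (auto simp: psi_k_def)
    qed (use assms in auto)
  next
    case False
    show ?thesis
    proof (rule main_lim[where p = "Re a - 1" and q = "- Re a", OF assms(1-3) _ _ psi_meas psiG_meas _ psi_lim])
      fix t u v :: real assume tuv: "t < T" "0 \<le> u" "u \<le> T" "0 \<le> v" "v \<le> T"
      show "norm (psi_k T a t u v) \<le> (T - u) powr (Re a - 1) * (T - v) powr (- Re a)"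
      proof (cases "0 \<le> v \<and> v \<le> u \<and> u \<le> t")
        case c: True
        then show ?thesis using tuv by (simp add: norm_psi)
      qed (auto simp: psi_k_def)
    qed (use assms r False in auto)
  qed
next
  assume r: "Re a < H"
  show "\<exists>L. ((\<lambda>t. EI11sq H T (phi_k T a t)) \<longlongrightarrow> L) (at_left T)"
  proof (cases "Re a \<le> 1/2")
    case True
    show ?thesis
    proof (rule main_lim[where p = "-1/2" and q = "-1/2", OF assms(1-3) _ _ phi_meas phiG_meas _ phi_lim])
      fix t u v :: real assume tuv: "t < T" "0 \<le> u" "u \<le> T" "0 \<le> v" "v \<le> T"
      show "norm (phi_k T a t u v) \<le> (T - u) powr (-1/2) * (T - v) powr (-1/2)"
      proof (cases "0 \<le> u \<and> u \<le> v \<and> v \<le> t")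
        case c: True
        then show ?thesis using tuv True k2[of "T-v" "T-u" "Re a"] by (simp add: norm_phi)
      qed (auto simp: phi_k_def)
    qed (use assms in auto)
  next
    case False
    show ?thesis
    proof (rule main_lim[where p = "Re a - 1" and q = "- Re a", OF assms(1-3) _ _ phi_meas phiG_meas _ phi_lim])
      fix t u v :: real assume tuv: "t < T" "0 \<le> u" "u \<le> T" "0 \<le> v" "v \<le> T"
      show "norm (phi_k T a t u v) \<le> (T - u) powr (Re a - 1) * (T - v) powr (- Re a)"
      proof (cases "0 \<le> u \<and> u \<le> v \<and> v \<le> t")
        case c: True
        then show ?thesis using tuv by (simp add: norm_phi)
      qed (auto simp: phi_k_def)
    qed (use assms r False in auto)
  qed
qed

end
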